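(* Let $L>1$ and define $$\sigma_{0,2}=\frac{L+1}{L\ln L},\qquad \sigma_{1,2}=\frac{(L^2+1)+\sqrt{(L-1)^4+4L^2}}{2L(L-1)},$$ $$\sigma_{2,1}=\frac{(1+L^4)-\sqrt{(1+L^4)^2-4L(1+L^2)^2(1-L)^2}}{L(L-1)(1+L^2)}.$$ Then (1) $\sigma_{0,2}\le\sigma_{1,2}$ and (2) $\sigma_{2,1}\le\sigma_{0,2}$.
   Context: These are (for $n=2$) Steklov eigenvalues of the planar annulus $\{1<|x|<L\}$, but the claim is the stated inequality between the explicit expressions. *)

theory Defs
  imports Complex_Main
begin

end

theory Submission
  imports Defs
begin

lemma ln_lower: fixes x :: real assumes "x \<ge> 1" shows "2*(x-1)/(x+1) \<le> ln x"
proof -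
  have "(\<lambda>t. ln t - 2*(t-1)/(t+1)) 1 \<le> (\<lambda>t. ln t - 2*(t-1)/(t+1)) x"
  proof (rule DERIV_nonneg_imp_increasing_open[OF assms])
    fix t :: real assume t: "1 < t" "t < x"
    have "DERIV (\<lambda>t. ln t - 2*(t-1)/(t+1)) t :> 1/t - 4/(t+1)^2"
      using t by (auto intro!: derivative_eq_intros simp: field_simps power2_eq_square)
    moreover have "1/t - 4/(t+1)^2 = (t-1)^2/(t*(t+1)^2)"
    proof -
      have "t \<noteq> 0" "(t+1)^2 \<noteq> 0" using t by auto
      thus ?thesis by (simp add: divide_simps) (simp add: power2_eq_square algebra_simps)
    qed
    moreover have "(t-1)^2/(t*(t+1)^2) \<ge> 0" using t by simp
    ultimately show "\<exists>y. DERIV (\<lambda>t. ln t - 2*(t-1)/(t+1)) t :> y \<and> y \<ge> 0" by auto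
  next
    show "continuous_on {1..x} (\<lambda>t. ln t - 2*(t-1)/(t+1))"
      by (intro continuous_intros) auto
  qed
  thus ?thesis by simp
qed

lemma ln_upper: fixes x :: real assumes "x \<ge> 1" shows "ln x \<le> (x^2-1)/(2*x)"
proof -
  have "(\<lambda>t. (t^2-1)/(2*t) - ln t) 1 \<le> (\<lambda>t. (t^2-1)/(2*t) - ln t) x"
  proof (rule DERIV_nonneg_imp_increasing_open[OF assms])
    fix t :: real assume t: "1 < t" "t < x"
    have "DERIV (\<lambda>t. (t^2-1)/(2*t) - ln t) t :> ((2*t)*(2*t) - (t^2-1)*2)/(2*t)^2 - 1/t"
      using t by (auto intro!: derivative_eq_intros simp: field_simps power2_eq_square)
    moreover have "((2*t)*(2*t) - (t^2-1)*2)/(2*t)^2 - 1/t = (t-1)^2/(2*t^2)"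
      using t by (simp add: field_simps power2_eq_square)
    moreover have "(t-1)^2/(2*t^2) \<ge> 0" using t by simp
    ultimately show "\<exists>y. DERIV (\<lambda>t. (t^2-1)/(2*t) - ln t) t :> y \<and> y \<ge> 0" by auto
  next
    show "continuous_on {1..x} (\<lambda>t. (t^2-1)/(2*t) - ln t)"
      by (intro continuous_intros) auto
  qed
  thus ?thesis by simp
qed

lemma poly1: fixes u :: real assumes "u \<ge> 1"
  shows "4*(1+(u^2)^4)*(1+(u^2)^2)*(u^2-1)^2*u
     \<le> (u^2+1)*(2*(1+(u^2)^4)^2 - 4*u^2*(1+(u^2)^2)^2*(u^2-1)^2)"
proof -
  obtain v where v: "v \<ge> 0" "u = 1 + v" using assms by (metis add.commute diff_add_cancel diff_ge_0_iff_ge)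
  have "(u^2+1)*(2*(1+(u^2)^4)^2 - 4*u^2*(1+(u^2)^2)^2*(u^2-1)^2) - 4*(1+(u^2)^4)*(1+(u^2)^2)*(u^2-1)^2*u
    = 16 + 144*v^1 + 648*v^2 + 1920*v^3 + 4240*v^4 + 7504*v^5 + 11216*v^6 + 14672*v^7 + 17368*v^8 + 19080*v^9 + 19280*v^10 + 17120*v^11 + 12632*v^12 + 7384*v^13 + 3284*v^14 + 1064*v^15 + 236*v^16 + 32*v^17 + 2*v^18"
    unfolding v(2) by algebra
  moreover have "0 \<le> 16 + 144*v^1 + 648*v^2 + 1920*v^3 + 4240*v^4 + 7504*v^5 + 11216*v^6 + 14672*v^7 + 17368*v^8 + 19080*v^9 + 19280*v^10 + 17120*v^11 + 12632*v^12 + 7384*v^13 + 3284*v^14 + 1064*v^15 + 236*v^16 + 32*v^17 + 2*v^18"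
    using v(1) by (intro add_nonneg_nonneg mult_nonneg_nonneg zero_le_power) auto
  ultimately show ?thesis by linarith
qed

lemma poly2: fixes L :: real assumes "L \<ge> 1"
  shows "4 * L * (1 + L^2)^2 * (1 - L)^2 \<le> (1 + L^4)^2"
proof -
  obtain v where v: "v \<ge> 0" "L = 1 + v" using assms by (metis add.commute diff_add_cancel diff_ge_0_iff_ge)
  have "(1 + L^4)^2 - 4 * L * (1 + L^2)^2 * (1 - L)^2 = 4 + 16*v + 24*v^2 + 16*v^3 + 8*v^4 + 8*v^5 + 8*v^6 + 4*v^7 + v^8"
    unfolding v(2) by algebra
  moreover have "0 \<le> 4 + 16*v + 24*v^2 + 16*v^3 + 8*v^4 + 8*v^5 + 8*v^6 + 4*v^7 + v^8"
    using v(1) by (intro add_nonneg_nonneg mult_nonneg_nonneg zero_le_power) auto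
  ultimately show ?thesis by linarith
qed

theorem lemma2p2:
  fixes L :: real
  assumes "L > 1"
  shows "(L + 1) / (L * ln L)
           \<le> ((L^2 + 1) + sqrt ((L - 1)^4 + 4 * L^2)) / (2 * L * (L - 1))
         \<and> ((1 + L^4) - sqrt ((1 + L^4)^2 - 4 * L * (1 + L^2)^2 * (1 - L)^2))
             / (L * (L - 1) * (1 + L^2))
           \<le> (L + 1) / (L * ln L)"
proof
  have lnpos: "ln L > 0" using assms by simp
  have lb: "2*(L-1)/(L+1) \<le> ln L" using ln_lower assms by simp
  have lb2: "0 < 2*(L-1)/(L+1)" using assms by simp
  have S: "2*L \<le> sqrt ((L - 1)^4 + 4 * L^2)"
  proof -
    have "2*L = sqrt ((2*L)^2)" using assms by (subst real_sqrt_abs) simp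
    also have "\<dots> \<le> sqrt ((L - 1)^4 + 4 * L^2)" by (intro real_sqrt_le_mono) (simp add: power_mult_distrib)
    finally show ?thesis .
  qed
  have "(L + 1) / (L * ln L) \<le> (L + 1) / (L * (2*(L-1)/(L+1)))"
    using assms lb lb2 by (intro divide_left_mono mult_left_mono mult_pos_pos) auto
  also have "\<dots> = (L+1)^2 / (2*L*(L-1))" using assms by (simp add: field_simps power2_eq_square)
  also have "\<dots> \<le> ((L^2 + 1) + sqrt ((L - 1)^4 + 4 * L^2)) / (2 * L * (L - 1))"
    using assms S by (intro divide_right_mono) (auto simp: power2_eq_square algebra_simps)
  finally show "(L + 1) / (L * ln L)
           \<le> ((L^2 + 1) + sqrt ((L - 1)^4 + 4 * L^2)) / (2 * L * (L - 1))" .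
next
  define u where "u = sqrt L"
  have u1: "u > 1" using assms u_def by simp
  have Lu: "L = u^2" using assms u_def by simp
  define A where "A = 1 + L^4"
  define B where "B = 4 * L * (1 + L^2)^2 * (1 - L)^2"
  define s where "s = sqrt (A^2 - B)"
  have A0: "A > 0" unfolding A_def by (simp add: add_pos_nonneg)
  have B0: "B > 0" unfolding B_def using assms by (intro mult_pos_pos) (auto simp: add_pos_nonneg power2_eq_square mult_neg_neg)
  have D0: "A^2 - B \<ge> 0" unfolding A_def B_def using poly2 assms by simp
  have s0: "s \<ge> 0" unfolding s_def using D0 by simp
  have ss: "s^2 = A^2 - B" unfolding s_def using D0 by simp
  have sA: "s \<le> A" unfolding s_def using A0 B0
    by (metis abs_of_pos diff_le_eq le_add_same_cancel1 less_imp_le real_sqrt_abs real_sqrt_le_mono)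
  have sD: "s*A \<ge> A^2 - B" using sA s0 ss by (metis mult_left_mono power2_eq_square)
  have apos: "A + s > 0" using A0 s0 by simp
  have prod: "(A - s)*(A+s) = B" using ss by (simp add: algebra_simps power2_eq_square)
  have twoA: "2*A^2 - B > 0" using D0 A0 by (smt (verit) zero_less_power)
  have key1: "A - s \<le> A*B/(2*A^2 - B)"
  proof -
    have "A - s = B / (A+s)" using prod apos by (simp add: field_simps)
    also have "\<dots> \<le> B / ((2*A^2-B)/A)"
    proof (rule divide_left_mono)
      show "(2*A^2-B)/A \<le> A + s" using A0 sD by (simp add: divide_simps power2_eq_square algebra_simps)
      show "0 \<le> B" using B0 by simp
      show "0 < (A + s) * ((2*A^2-B)/A)" using apos twoA A0 by simp
    qed
    also have "\<dots> = A*B/(2*A^2 - B)" using A0 by (simp add: field_simps)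
    finally show ?thesis .
  qed
  have lnU: "ln L \<le> (L-1)/u"
  proof -
    have "ln L = 2 * ln u" using Lu u1 by (simp add: ln_realpow)
    also have "\<dots> \<le> 2 * ((u^2-1)/(2*u))" using ln_upper[of u] u1 by (intro mult_left_mono) auto
    also have "\<dots> = (L-1)/u" using Lu u1 by (simp add: field_simps)
    finally show ?thesis .
  qed
  have lnpos: "ln L > 0" using assms by simp
  have den: "L * (L - 1) * (1 + L^2) > 0" using assms by (simp add: add_pos_nonneg)
  have "(A - s) / (L * (L - 1) * (1 + L^2)) \<le> (A*B/(2*A^2 - B)) / (L * (L - 1) * (1 + L^2))"
    using key1 den by (intro divide_right_mono) auto
  also have "\<dots> \<le> (L+1) / (L * ((L-1)/u))"
  proof -
    have P: "4*A*(1+L^2)*(L-1)^2*u \<le> (L+1)*(2*A^2 - B)"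
      using poly1[of u] u1 unfolding A_def B_def Lu by (simp add: power2_eq_square algebra_simps)
    have "(A*B/(2*A^2 - B)) / (L * (L - 1) * (1 + L^2)) = 4*A*(1+L^2)*(L-1) / (2*A^2 - B)"
    proof -
      have Bd: "B = (L * (L - 1) * (1 + L^2)) * (4*(1+L^2)*(L-1))"
        unfolding B_def by (simp add: power2_eq_square algebra_simps)
      have q: "B / (L * (L - 1) * (1 + L^2)) = 4*(1+L^2)*(L-1)"
        using den assms by (subst Bd) simp
      have "(A*B/(2*A^2 - B)) / (L * (L - 1) * (1 + L^2)) = A * (B / (L * (L - 1) * (1 + L^2))) / (2*A^2 - B)"
        by simp
      thus ?thesis using q by simp
    qed
    also have "\<dots> \<le> (L+1) / (u*(L-1))"
    proof -
      have "4*A*(1+L^2)*(L-1) * (u*(L-1)) \<le> (L+1) * (2*A^2 - B)" using P by (simp add: power2_eq_square mult_ac)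
      thus ?thesis using twoA assms u1 by (simp add: divide_simps)
    qed
    also have "\<dots> = (L+1) / (L * ((L-1)/u))"
      using assms u1 Lu by (simp add: field_simps power2_eq_square)
    finally show ?thesis .
  qed
  also have "\<dots> \<le> (L + 1) / (L * ln L)"
    using assms lnU lnpos u1 by (intro divide_left_mono mult_left_mono mult_pos_pos) auto
  finally show "((1 + L^4) - sqrt ((1 + L^4)^2 - 4 * L * (1 + L^2)^2 * (1 - L)^2))
             / (L * (L - 1) * (1 + L^2))
           \<le> (L + 1) / (L * ln L)" unfolding s_def A_def B_def .
qed

end
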